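(* Let $\beta\ne0$, and consider the episodic MDP with finite state space, tabular deterministic policy $\mu_\theta(s)=\theta_s$, soft value functions $V^\beta_{\mu_\theta},Q^\beta_{\mu_\theta}$ and behavior state weights $\rho_b$ as in the context. Define $g(\mu_\theta)$ as the parameter vector whose block for state $s$ is $$g(\mu_\theta)_s=\rho_b(s)\,\nabla_aQ^\beta_{\mu_\theta}(s,a)\big|_{a=\mu_\theta(s)}\in\mathbb{R}^m$$ (i.e. $g(\mu_\theta)=\sum_{s}\rho_b(s)\nabla_\theta\mu_\theta(s)\nabla_aQ^\beta_{\mu_\theta}(s,a)|_{a=\mu_\theta(s)}$), and let $\theta'=\theta+\alpha\,g(\mu_\theta)$. Then there exists $\epsilon>0$ such that for all $0<\alpha<\epsilon$, $$V^\beta_{\mu_\theta}(s)\le V^\beta_{\mu_{\theta'}}(s)\qquad\text{for all }s\in\mathcal S.$$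
   Context: Episodic MDP: finite state space $\mathcal S$, action space $\mathcal A=\mathbb{R}^m$, transition probabilities $p(s'|s,a)$ (a probability mass function on $\mathcal S$ for each $(s,a)$) and reward $r(s,a)$, with $a\mapsto p(s'|s,a)$ and $a\mapsto r(s,a)$ continuously differentiable. There is a set $\mathcal S_{\rm term}\subset\mathcal S$ of absorbing terminal states with $r(s,a)=0$ and $p(\mathcal S_{\rm term}|s,a)=1$ for $s\in\mathcal S_{\rm term}$, and an integer $T$ such that from any state, under any sequence of actions, the state lies in $\mathcal S_{\rm term}$ after at most $T$ transitions with probability 1. Tabular (linear) deterministic policy: $\theta=(\theta_s)_{s\in\mathcal S}$ with $\theta_s\in\mathbb{R}^m$ and $\mu_\theta(s)=\theta_s$. Soft value functions of a deterministic policy $\mu$: $V^\beta_\mu(s)=\frac1\beta\log\mathbb{E}\big[e^{\beta\sum_{t\ge1}r_t}\mid s_1=s\big]$ and $Q^\beta_\mu(s,a)=\frac1\beta\log\mathbb{E}\big[e^{\beta\sum_{t\ge1}r_t}\mid s_1=s,a_1=a\big]$, where $a_t=\mu(s_t)$ for $t\ge2$ (and $t\ge1$ for $V$); the sums are a.s. finite. They satisfy $V^\beta_\mu(s)=Q^\beta_\mu(s,\mu(s))$ and $Q^\beta_\mu(s,a)=r(s,a)+\frac1\beta\log\sum_{s'}p(s'|s,a)e^{\beta V^\beta_\mu(s')}$. $\rho_b:\mathcal S\to[0,\infty)$ is the state distribution of an arbitrary behavior policy (any nonnegative weights). *)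

theory Defs
  imports "HOL-Analysis.Analysis"
begin

text \<open>Conventions. States: a finite type 's. Actions: real ^ 'm (i.e. R^m).
  Transition probabilities: p s a s' = p(s'|s,a). Reward: r s a.
  A deterministic (stationary) policy is mu :: 's => real^'m.\<close>

definition C1_real :: "('v::real_inner \<Rightarrow> real) \<Rightarrow> bool" where
  "C1_real f \<longleftrightarrow> (\<exists>G. (\<forall>a. GDERIV f a :> G a) \<and> continuous_on UNIV G)"

definition grad :: "('v::real_inner \<Rightarrow> real) \<Rightarrow> 'v \<Rightarrow> 'v" where
  "grad f a = (SOME D. GDERIV f a :> D)"

definition episodic_mdp ::
  "('s::finite \<Rightarrow> real^'m \<Rightarrow> 's \<Rightarrow> real) \<Rightarrow> ('s \<Rightarrow> real^'m \<Rightarrow> real) \<Rightarrow> 's set \<Rightarrow> nat \<Rightarrow> bool" where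
  "episodic_mdp p r Sterm T \<longleftrightarrow>
     (\<forall>s a s'. 0 \<le> p s a s') \<and>
     (\<forall>s a. (\<Sum>s'\<in>UNIV. p s a s') = 1) \<and>
     (\<forall>s s'. C1_real (\<lambda>a. p s a s')) \<and>
     (\<forall>s. C1_real (\<lambda>a. r s a)) \<and>
     (\<forall>s\<in>Sterm. \<forall>a. r s a = 0 \<and> (\<Sum>s'\<in>Sterm. p s a s') = 1) \<and>
     (\<forall>ss :: nat \<Rightarrow> 's. \<forall>as :: nat \<Rightarrow> real^'m.
        (\<forall>i<T. 0 < p (ss i) (as i) (ss (Suc i))) \<longrightarrow> ss T \<in> Sterm)"

text \<open>exp_ret p r beta mu k s = E[ exp(beta * sum_{t=1}^k r_t) | s_1 = s ] under
  policy mu (computed by the tower rule, backwards in time).\<close>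
fun exp_ret ::
  "('s::finite \<Rightarrow> real^'m \<Rightarrow> 's \<Rightarrow> real) \<Rightarrow> ('s \<Rightarrow> real^'m \<Rightarrow> real) \<Rightarrow> real
   \<Rightarrow> ('s \<Rightarrow> real^'m) \<Rightarrow> nat \<Rightarrow> 's \<Rightarrow> real" where
  "exp_ret p r \<beta> \<mu> 0 s = 1"
| "exp_ret p r \<beta> \<mu> (Suc k) s =
     exp (\<beta> * r s (\<mu> s)) * (\<Sum>s'\<in>UNIV. p s (\<mu> s) s' * exp_ret p r \<beta> \<mu> k s')"

text \<open>E[ exp(beta * sum_{t>=1} r_t) | s_1 = s ] as the limit of the finite-horizon values.\<close>
definition exp_ret_inf ::
  "('s::finite \<Rightarrow> real^'m \<Rightarrow> 's \<Rightarrow> real) \<Rightarrow> ('s \<Rightarrow> real^'m \<Rightarrow> real) \<Rightarrow> real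
   \<Rightarrow> ('s \<Rightarrow> real^'m) \<Rightarrow> 's \<Rightarrow> real" where
  "exp_ret_inf p r \<beta> \<mu> s = lim (\<lambda>k. exp_ret p r \<beta> \<mu> k s)"

definition soft_V ::
  "('s::finite \<Rightarrow> real^'m \<Rightarrow> 's \<Rightarrow> real) \<Rightarrow> ('s \<Rightarrow> real^'m \<Rightarrow> real) \<Rightarrow> real
   \<Rightarrow> ('s \<Rightarrow> real^'m) \<Rightarrow> 's \<Rightarrow> real" where
  "soft_V p r \<beta> \<mu> s = ln (exp_ret_inf p r \<beta> \<mu> s) / \<beta>"

text \<open>Q(s,a) = (1/beta) log E[exp(beta sum r_t) | s_1=s, a_1=a], following mu from t=2.\<close>
definition soft_Q ::
  "('s::finite \<Rightarrow> real^'m \<Rightarrow> 's \<Rightarrow> real) \<Rightarrow> ('s \<Rightarrow> real^'m \<Rightarrow> real) \<Rightarrow> real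
   \<Rightarrow> ('s \<Rightarrow> real^'m) \<Rightarrow> 's \<Rightarrow> real^'m \<Rightarrow> real" where
  "soft_Q p r \<beta> \<mu> s a =
     ln (exp (\<beta> * r s a) * (\<Sum>s'\<in>UNIV. p s a s' * exp_ret_inf p r \<beta> \<mu> s')) / \<beta>"

definition pg_dir ::
  "('s::finite \<Rightarrow> real^'m \<Rightarrow> 's \<Rightarrow> real) \<Rightarrow> ('s \<Rightarrow> real^'m \<Rightarrow> real) \<Rightarrow> real
   \<Rightarrow> ('s \<Rightarrow> real) \<Rightarrow> ('s \<Rightarrow> real^'m) \<Rightarrow> 's \<Rightarrow> real^'m" where
  "pg_dir p r \<beta> \<rho> \<theta> s = \<rho> s *\<^sub>R grad (\<lambda>a. soft_Q p r \<beta> \<theta> s a) (\<theta> s)"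

end

theory Submission
  imports Defs
begin

definition Bop :: "('s::finite \<Rightarrow> real^'m \<Rightarrow> 's \<Rightarrow> real) \<Rightarrow> ('s \<Rightarrow> real^'m \<Rightarrow> real) \<Rightarrow> real
   \<Rightarrow> ('s \<Rightarrow> real^'m) \<Rightarrow> ('s \<Rightarrow> real) \<Rightarrow> 's \<Rightarrow> real" where
  "Bop p r \<beta> \<mu> f = (\<lambda>s. exp (\<beta> * r s (\<mu> s)) * (\<Sum>s'\<in>UNIV. p s (\<mu> s) s' * f s'))"

lemma GDERIV_sum:
  "(\<And>i. i \<in> I \<Longrightarrow> GDERIV (\<lambda>x. f i x) x0 :> D i) \<Longrightarrow> GDERIV (\<lambda>x. \<Sum>i\<in>I. f i x) x0 :> (\<Sum>i\<in>I. D i)"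
  by (induction I rule: infinite_finite_induct) (auto intro: GDERIV_add GDERIV_const)

locale mdp =
  fixes p :: "'s::finite \<Rightarrow> real^'m \<Rightarrow> 's \<Rightarrow> real"
    and r :: "'s \<Rightarrow> real^'m \<Rightarrow> real"
    and Sterm :: "'s set" and T :: nat and \<beta> :: real
  assumes epi: "episodic_mdp p r Sterm T"
begin

lemma nonneg: "0 \<le> p s a s'" using epi unfolding episodic_mdp_def by blast
lemma sum1: "(\<Sum>s'\<in>UNIV. p s a s') = 1" using epi unfolding episodic_mdp_def by blast
lemma termS: "s \<in> Sterm \<Longrightarrow> (\<Sum>s'\<in>Sterm. p s a s') = 1 \<and> r s a = 0"
  using epi unfolding episodic_mdp_def by blast
lemma paths: "(\<forall>i<T. 0 < p (ss i) (as i) (ss (Suc i))) \<Longrightarrow> ss T \<in> Sterm"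
  using epi unfolding episodic_mdp_def by blast

lemma term_zero:
  assumes "s \<in> Sterm" "s' \<notin> Sterm" shows "p s a s' = 0"
proof -
  have "(\<Sum>x\<in>UNIV. p s a x) = (\<Sum>x\<in>Sterm. p s a x) + (\<Sum>x\<in>UNIV - Sterm. p s a x)"
    by (metis add.commute finite sum.subset_diff top_greatest)
  hence z: "(\<Sum>x\<in>UNIV - Sterm. p s a x) = 0" using sum1 termS[OF assms(1)] by simp
  have "\<forall>x\<in>UNIV - Sterm. p s a x = 0"
    using sum_nonneg_eq_0_iff[of "UNIV - Sterm" "p s a"] z nonneg by auto
  thus ?thesis using assms by auto
qed

lemma B_term:
  assumes "s \<in> Sterm" "\<forall>x\<in>Sterm. f x = 1" shows "Bop p r \<beta> \<mu> f s = 1"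
proof -
  have "(\<Sum>s'\<in>UNIV. p s (\<mu> s) s' * f s') = (\<Sum>s'\<in>Sterm. p s (\<mu> s) s' * f s')"
    by (rule sum.mono_neutral_right) (auto simp: term_zero assms)
  also have "\<dots> = (\<Sum>s'\<in>Sterm. p s (\<mu> s) s')" using assms by simp
  finally show ?thesis using termS[OF assms(1)] by (simp add: Bop_def)
qed

lemma pow_term:
  assumes "\<forall>x\<in>Sterm. f x = 1" shows "\<forall>x\<in>Sterm. (Bop p r \<beta> \<mu> ^^ k) f x = 1"
  by (induction k) (auto simp: assms B_term)

lemma path_lemma:
  "\<forall>s. (\<forall>ss as. ss 0 = s \<and> (\<forall>i<k. 0 < p (ss i) (as i) (ss (Suc i))) \<longrightarrow> ss k \<in> Sterm) \<longrightarrow>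
     (\<forall>x\<in>Sterm. f x = g x) \<longrightarrow> (Bop p r \<beta> \<mu> ^^ k) f s = (Bop p r \<beta> \<mu> ^^ k) g s"
proof (induction k)
  case 0
  show ?case
  proof (intro allI impI)
    fix s assume h: "\<forall>ss as. ss 0 = s \<and> (\<forall>i<0. 0 < p (ss i) (as i) (ss (Suc i))) \<longrightarrow> ss 0 \<in> Sterm"
      and fg: "\<forall>x\<in>Sterm. f x = g x"
    from h[rule_format, of "\<lambda>_. s"] have "s \<in> Sterm" by simp
    thus "(Bop p r \<beta> \<mu> ^^ 0) f s = (Bop p r \<beta> \<mu> ^^ 0) g s" using fg by simp
  qed
next
  case (Suc k)
  show ?case
  proof (intro allI impI)
    fix s assume h: "\<forall>ss as. ss 0 = s \<and> (\<forall>i<Suc k. 0 < p (ss i) (as i) (ss (Suc i))) \<longrightarrow> ss (Suc k) \<in> Sterm"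
      and fg: "\<forall>x\<in>Sterm. f x = g x"
    have eq: "p s (\<mu> s) s' * (Bop p r \<beta> \<mu> ^^ k) f s' = p s (\<mu> s) s' * (Bop p r \<beta> \<mu> ^^ k) g s'" for s'
    proof (cases "p s (\<mu> s) s' = 0")
      case False
      hence pos: "0 < p s (\<mu> s) s'" using nonneg[of s "\<mu> s" s'] by linarith
      have "(\<forall>ss as. ss 0 = s' \<and> (\<forall>i<k. 0 < p (ss i) (as i) (ss (Suc i))) \<longrightarrow> ss k \<in> Sterm)"
      proof (intro allI impI)
        fix ss :: "nat \<Rightarrow> 's" and as :: "nat \<Rightarrow> real^'m"
        assume a: "ss 0 = s' \<and> (\<forall>i<k. 0 < p (ss i) (as i) (ss (Suc i)))"
        define ss' where "ss' = (\<lambda>i. if i = 0 then s else ss (i - 1))"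
        define as' where "as' = (\<lambda>i. if i = 0 then \<mu> s else as (i - 1))"
        have "\<forall>i<Suc k. 0 < p (ss' i) (as' i) (ss' (Suc i))"
        proof (intro allI impI)
          fix i assume "i < Suc k"
          thus "0 < p (ss' i) (as' i) (ss' (Suc i))"
            using a pos by (cases i) (auto simp: ss'_def as'_def)
        qed
        moreover have "ss' 0 = s" by (simp add: ss'_def)
        ultimately have "ss' (Suc k) \<in> Sterm" using h by blast
        thus "ss k \<in> Sterm" by (simp add: ss'_def)
      qed
      then show ?thesis using Suc.IH fg by simp
    qed simp
    show "(Bop p r \<beta> \<mu> ^^ Suc k) f s = (Bop p r \<beta> \<mu> ^^ Suc k) g s"
      by (simp only: funpow.simps o_apply Bop_def eq)
  qed
qed

lemma powT_eq:
  assumes "\<forall>x\<in>Sterm. f x = g x" shows "(Bop p r \<beta> \<mu> ^^ T) f = (Bop p r \<beta> \<mu> ^^ T) g"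
proof
  fix s show "(Bop p r \<beta> \<mu> ^^ T) f s = (Bop p r \<beta> \<mu> ^^ T) g s"
    using path_lemma[of T f g \<mu>] assms paths by blast
qed

lemma exp_ret_pow: "exp_ret p r \<beta> \<mu> k = (Bop p r \<beta> \<mu> ^^ k) (\<lambda>_. 1)"
  by (induction k) (auto simp: Bop_def)

definition E where "E \<mu> = (Bop p r \<beta> \<mu> ^^ T) (\<lambda>_. 1)"

lemma E_any: "\<forall>x\<in>Sterm. f x = 1 \<Longrightarrow> (Bop p r \<beta> \<mu> ^^ T) f = E \<mu>"
  unfolding E_def by (rule powT_eq) simp

lemma exp_ret_inf_E: "exp_ret_inf p r \<beta> \<mu> = E \<mu>"
proof
  fix s
  have ev: "exp_ret p r \<beta> \<mu> k s = E \<mu> s" if "k \<ge> T" for k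
  proof -
    have "exp_ret p r \<beta> \<mu> k = (Bop p r \<beta> \<mu> ^^ T) ((Bop p r \<beta> \<mu> ^^ (k - T)) (\<lambda>_. 1))"
      proof -
      have "k = T + (k - T)" using that by simp
      hence "(Bop p r \<beta> \<mu> ^^ k) = (Bop p r \<beta> \<mu> ^^ T) o (Bop p r \<beta> \<mu> ^^ (k - T))"
        by (metis funpow_add)
      thus ?thesis by (simp add: exp_ret_pow)
    qed
    also have "\<dots> = E \<mu>" by (rule E_any) (rule pow_term, simp)
    finally show ?thesis by simp
  qed
  have "(\<lambda>k. exp_ret p r \<beta> \<mu> k s) \<longlonglongrightarrow> E \<mu> s"
    by (rule tendsto_eventually) (use ev in \<open>auto simp: eventually_sequentially\<close>)
  thus "exp_ret_inf p r \<beta> \<mu> s = E \<mu> s" unfolding exp_ret_inf_def by (rule limI)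
qed

lemma E_term: "\<forall>x\<in>Sterm. E \<mu> x = 1"
  unfolding E_def by (rule pow_term) simp

lemma B_pos: "\<forall>x. 0 < f x \<Longrightarrow> 0 < Bop p r \<beta> \<mu> f s"
proof -
  assume f: "\<forall>x. 0 < f x"
  obtain s' where "p s (\<mu> s) s' \<noteq> 0" using sum1[of s "\<mu> s"] by (metis sum.neutral zero_neq_one)
  hence "0 < p s (\<mu> s) s' * f s'" using nonneg[of s "\<mu> s" s'] f by simp
  hence "0 < (\<Sum>s'\<in>UNIV. p s (\<mu> s) s' * f s')"
    using sum_pos2[of UNIV s' "\<lambda>x. p s (\<mu> s) x * f x"] f nonneg by (simp add: less_imp_le)
  thus ?thesis by (simp add: Bop_def)
qed

lemma E_pos: "0 < E \<mu> s"
proof -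
  have "\<forall>x. 0 < (Bop p r \<beta> \<mu> ^^ k) (\<lambda>_. 1) x" for k
    by (induction k) (auto intro: B_pos)
  thus ?thesis unfolding E_def by blast
qed

lemma B_E: "Bop p r \<beta> \<mu> (E \<mu>) = E \<mu>"
proof -
  have "Bop p r \<beta> \<mu> (E \<mu>) = (Bop p r \<beta> \<mu> ^^ T) (Bop p r \<beta> \<mu> (\<lambda>_. 1))"
    unfolding E_def by (metis funpow_Suc_right funpow.simps(2) o_apply)
  also have "\<dots> = E \<mu>" by (rule E_any) (auto intro: B_term)
  finally show ?thesis .
qed

lemma B_mono: "\<forall>x. f x \<le> g x \<Longrightarrow> Bop p r \<beta> \<mu> f s \<le> Bop p r \<beta> \<mu> g s"
  unfolding Bop_def by (auto intro!: mult_left_mono sum_mono nonneg)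

lemma improve_up:
  assumes "\<forall>s. W s \<le> Bop p r \<beta> \<mu> W s" shows "W s \<le> (Bop p r \<beta> \<mu> ^^ k) W s"
proof -
  have "\<forall>s. W s \<le> (Bop p r \<beta> \<mu> ^^ k) W s"
  proof (induction k)
    case (Suc k)
    show ?case using B_mono[OF Suc] assms by (auto intro: order_trans)
  qed simp
  thus ?thesis by blast
qed

lemma improve_down:
  assumes "\<forall>s. Bop p r \<beta> \<mu> W s \<le> W s" shows "(Bop p r \<beta> \<mu> ^^ k) W s \<le> W s"
proof -
  have "\<forall>s. (Bop p r \<beta> \<mu> ^^ k) W s \<le> W s"
  proof (induction k)
    case (Suc k)
    show ?case using B_mono[OF Suc] assms by (auto intro: order_trans)
  qed simp
  thus ?thesis by blast
qed


lemma soft_Q_eq: "soft_Q p r \<beta> \<theta> s a = ln (Bop p r \<beta> (\<lambda>_. a) (E \<theta>) s) / \<beta>"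
  by (simp add: soft_Q_def exp_ret_inf_E Bop_def)

lemma soft_V_eq: "soft_V p r \<beta> \<theta> s = ln (E \<theta> s) / \<beta>"
  by (simp add: soft_V_def exp_ret_inf_E)

lemma grad_exists: assumes b: "\<beta> \<noteq> 0" shows "\<exists>D. GDERIV (\<lambda>a. soft_Q p r \<beta> \<theta> s a) a0 :> D"
proof -
  define W where "W = E \<theta>"
  define S where "S = (\<lambda>a. \<Sum>s'\<in>UNIV. p s a s' * W s')"
  have Spos: "0 < S a" for a
  proof -
    have "0 < Bop p r \<beta> (\<lambda>_. a) W s" by (rule B_pos) (simp add: W_def E_pos)
    thus ?thesis by (simp add: Bop_def S_def zero_less_mult_iff)
  qed
  have eq: "(\<lambda>a. soft_Q p r \<beta> \<theta> s a) = (\<lambda>a. r s a + (\<lambda>y. ln y / \<beta>) (S a))"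
  proof
    fix a
    have "soft_Q p r \<beta> \<theta> s a = ln (exp (\<beta> * r s a) * S a) / \<beta>"
      by (simp add: soft_Q_eq Bop_def S_def W_def)
    also have "\<dots> = (\<beta> * r s a + ln (S a)) / \<beta>" using Spos[of a] by (simp add: ln_mult)
    also have "\<dots> = r s a + ln (S a) / \<beta>" using b
      by (simp add: field_simps)
    finally show "soft_Q p r \<beta> \<theta> s a = r s a + (\<lambda>y. ln y / \<beta>) (S a)" by simp
  qed
  obtain Gr where Gr: "\<And>a. GDERIV (\<lambda>a. r s a) a :> Gr a"
    using epi unfolding episodic_mdp_def C1_real_def by blast
  have "\<forall>s'. \<exists>G. \<forall>a. GDERIV (\<lambda>a. p s a s') a :> G a"
    using epi unfolding episodic_mdp_def C1_real_def by blast
  then obtain Gp where Gp: "\<And>s' a. GDERIV (\<lambda>a. p s a s') a :> Gp s' a" by metis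
  have GS: "GDERIV S a0 :> (\<Sum>s'\<in>UNIV. W s' *\<^sub>R Gp s' a0)"
    unfolding S_def
    by (rule GDERIV_sum) (rule GDERIV_subst[OF GDERIV_mult[OF Gp GDERIV_const]], simp)
  have Dl: "((\<lambda>y. ln y / \<beta>) has_real_derivative (1 / S a0 / \<beta>)) (at (S a0))"
    using Spos[of a0] b by (auto intro!: derivative_eq_intros)
  have "GDERIV (\<lambda>a. r s a + (\<lambda>y. ln y / \<beta>) (S a)) a0 :> Gr a0 + (1 / S a0 / \<beta>) *\<^sub>R (\<Sum>s'\<in>UNIV. W s' *\<^sub>R Gp s' a0)"
    by (rule GDERIV_add[OF Gr GDERIV_DERIV_compose[OF GS Dl]])
  thus ?thesis unfolding eq by blast
qed

end

lemma local_improve: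
  fixes q :: "'a::real_inner \<Rightarrow> real"
  assumes "0 \<le> \<rho>" and G: "GDERIV q x :> D"
  shows "\<exists>e>0. \<forall>\<alpha>. 0 < \<alpha> \<and> \<alpha> < e \<longrightarrow> q x \<le> q (x + \<alpha> *\<^sub>R (\<rho> *\<^sub>R D))"
proof (cases "\<rho> *\<^sub>R D = 0")
  case True
  show ?thesis by (rule exI[of _ 1]) (simp only: True scaleR_zero_right add_0_right order_refl zero_less_one simp_thms)
next
  case False
  define d where "d = \<rho> *\<^sub>R D"
  have "\<rho> \<noteq> 0" "D \<noteq> 0" using False by auto
  hence pos: "0 < d \<bullet> D" using assms(1) by (simp add: d_def)
  have f: "((\<lambda>t::real. x + t *\<^sub>R d) has_derivative (\<lambda>t. t *\<^sub>R d)) (at 0)"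
    by (auto intro!: derivative_eq_intros)
  have g: "(q has_derivative (\<lambda>h. h \<bullet> D)) (at ((\<lambda>t::real. x + t *\<^sub>R d) 0))"
    using G by (simp add: gderiv_def)
  have "((\<lambda>t. q (x + t *\<^sub>R d)) has_derivative (\<lambda>t. (t *\<^sub>R d) \<bullet> D)) (at 0)"
    using has_derivative_compose[OF f g] by simp
  hence "((\<lambda>t. q (x + t *\<^sub>R d)) has_real_derivative (d \<bullet> D)) (at 0)"
    proof -
    assume h: "((\<lambda>t. q (x + t *\<^sub>R d)) has_derivative (\<lambda>t. (t *\<^sub>R d) \<bullet> D)) (at 0)"
    have "(\<lambda>t. (t *\<^sub>R d) \<bullet> D) = (*) (d \<bullet> D)" by (rule ext) simp
    thus ?thesis using h unfolding has_field_derivative_def by simp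
  qed
  from DERIV_pos_inc_right[OF this pos] obtain e where "e > 0"
    and "\<forall>h>0. h < e \<longrightarrow> q (x + 0 *\<^sub>R d) < q (x + (0 + h) *\<^sub>R d)" by blast
  thus ?thesis unfolding d_def by (intro exI[of _ e]) (auto intro: less_imp_le)
qed

theorem theorem3:
  fixes p :: "'s::finite \<Rightarrow> real^'m \<Rightarrow> 's \<Rightarrow> real"
    and r :: "'s \<Rightarrow> real^'m \<Rightarrow> real"
    and Sterm :: "'s set" and T :: nat and \<beta> :: real
    and \<rho> :: "'s \<Rightarrow> real" and \<theta> :: "'s \<Rightarrow> real^'m"
  assumes "episodic_mdp p r Sterm T"
    and "\<beta> \<noteq> 0"
    and "\<forall>s. 0 \<le> \<rho> s"
  shows "\<exists>\<epsilon>>0. \<forall>\<alpha>. 0 < \<alpha> \<and> \<alpha> < \<epsilon> \<longrightarrow>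
           (\<forall>s. soft_V p r \<beta> \<theta> s
                 \<le> soft_V p r \<beta> (\<lambda>s'. \<theta> s' + \<alpha> *\<^sub>R pg_dir p r \<beta> \<rho> \<theta> s') s)"
proof -
  interpret M: mdp p r Sterm T \<beta> using assms(1) by unfold_locales
  define W where "W = M.E \<theta>"
  define q where "q = (\<lambda>s a. soft_Q p r \<beta> \<theta> s a)"
  have "\<forall>s. \<exists>e>0. \<forall>\<alpha>. 0 < \<alpha> \<and> \<alpha> < e \<longrightarrow>
      q s (\<theta> s) \<le> q s (\<theta> s + \<alpha> *\<^sub>R pg_dir p r \<beta> \<rho> \<theta> s)"
  proof
    fix s
    have "\<exists>D. GDERIV (q s) (\<theta> s) :> D" unfolding q_def by (rule M.grad_exists[OF assms(2)])
    hence G: "GDERIV (q s) (\<theta> s) :> grad (q s) (\<theta> s)" unfolding grad_def by (rule someI_ex)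
    have pg: "pg_dir p r \<beta> \<rho> \<theta> s = \<rho> s *\<^sub>R grad (q s) (\<theta> s)"
      by (simp add: pg_dir_def q_def)
    show "\<exists>e>0. \<forall>\<alpha>. 0 < \<alpha> \<and> \<alpha> < e \<longrightarrow>
      q s (\<theta> s) \<le> q s (\<theta> s + \<alpha> *\<^sub>R pg_dir p r \<beta> \<rho> \<theta> s)"
      unfolding pg using local_improve[OF _ G] assms(3) by blast
  qed
  then obtain e where e: "\<And>s. e s > 0" and
    eh: "\<And>s \<alpha>. 0 < \<alpha> \<Longrightarrow> \<alpha> < e s \<Longrightarrow> q s (\<theta> s) \<le> q s (\<theta> s + \<alpha> *\<^sub>R pg_dir p r \<beta> \<rho> \<theta> s)"
    by metis
  define \<epsilon> where "\<epsilon> = Min (range e)"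
  have epos: "\<epsilon> > 0" unfolding \<epsilon>_def using e by (subst Min_gr_iff) auto
  have ele: "\<epsilon> \<le> e s" for s unfolding \<epsilon>_def by (rule Min_le) auto
  show ?thesis
  proof (intro exI[of _ \<epsilon>] conjI allI impI epos)
    fix \<alpha> s assume a: "0 < \<alpha> \<and> \<alpha> < \<epsilon>"
    define \<mu> where "\<mu> = (\<lambda>s'. \<theta> s' + \<alpha> *\<^sub>R pg_dir p r \<beta> \<rho> \<theta> s')"
    have Wpos: "\<forall>x. 0 < W x" by (simp add: W_def M.E_pos)
    have Xpos: "0 < Bop p r \<beta> (\<lambda>_. a) W x" for a x by (rule M.B_pos[OF Wpos])
    have qW: "q x (\<theta> x) = ln (W x) / \<beta>" for x
    proof -
      have "Bop p r \<beta> (\<lambda>_. \<theta> x) W x = Bop p r \<beta> \<theta> W x" by (simp add: Bop_def)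
      also have "\<dots> = W x" unfolding W_def M.B_E ..
      finally show ?thesis by (simp add: q_def M.soft_Q_eq W_def)
    qed
    have qmu: "q x (\<mu> x) = ln (Bop p r \<beta> \<mu> W x) / \<beta>" for x
      by (simp add: q_def M.soft_Q_eq W_def Bop_def)
    have ineq: "ln (W x) / \<beta> \<le> ln (Bop p r \<beta> \<mu> W x) / \<beta>" for x
      using eh[of \<alpha> x] a ele[of x] qW qmu unfolding \<mu>_def by auto
    have Bmu_pos: "0 < Bop p r \<beta> \<mu> W x" for x by (rule M.B_pos[OF Wpos])
    have Emu: "M.E \<mu> = (Bop p r \<beta> \<mu> ^^ T) W"
      by (rule M.E_any[symmetric]) (simp add: W_def M.E_term)
    have Emu_pos: "0 < M.E \<mu> s" by (rule M.E_pos)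
    show "soft_V p r \<beta> \<theta> s \<le> soft_V p r \<beta> \<mu> s"
      unfolding M.soft_V_eq W_def[symmetric]
    proof (cases "\<beta> > 0")
      case True
      have "W x \<le> Bop p r \<beta> \<mu> W x" for x
        using ineq[of x] True Wpos Bmu_pos[of x] by (simp add: divide_le_cancel)
      hence "W s \<le> M.E \<mu> s" unfolding Emu by (intro M.improve_up) blast
      hence "ln (W s) \<le> ln (M.E \<mu> s)" using Wpos Emu_pos by simp
      thus "ln (W s) / \<beta> \<le> ln (M.E \<mu> s) / \<beta>"
        using True by (simp add: divide_right_mono)
    next
      case False
      hence bn: "\<beta> < 0" using assms(2) by simp
      have "Bop p r \<beta> \<mu> W x \<le> W x" for x
        using ineq[of x] bn Wpos Bmu_pos[of x] by (simp add: divide_le_cancel)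
      hence "M.E \<mu> s \<le> W s" unfolding Emu by (intro M.improve_down) blast
      hence "ln (M.E \<mu> s) \<le> ln (W s)" using Wpos Emu_pos by simp
      thus "ln (W s) / \<beta> \<le> ln (M.E \<mu> s) / \<beta>"
        using bn by (simp add: divide_right_mono_neg)
    qed
  qed
qed

end
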